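(* Let $B$ be a minimum-weight basis of the weighted uncertainty matroid $\mathcal{M}=(E,\mathcal{I},A,w)$ and let $Q$ be a certificate that verifies $B$. Let $e\in B$ and $e'\notin B$ with $w_e=w_{e'}$ be such that $B'=(B\setminus\{e\})\cup\{e'\}$ is independent. If each $f\in\{e,e'\}$ is either trivial or contained in $Q$, then $Q$ also verifies $B'$.
   Context: A weighted uncertainty matroid $\mathcal{M}=(E,\mathcal{I},A,w)$ consists of a matroid $M=(E,\mathcal{I})$ on a finite set $E$, for each $e\in E$ a non-empty finite union $A_e$ of bounded real intervals (each open or closed), and a weight $w_e\in A_e$. An element $e$ is trivial if $A_e=\{w_e\}$. A minimum-weight basis is a basis of $M$ minimizing the sum of weights. A weight assignment is $w^*:E\to\mathbb{R}$ with $w^*_e\in A_e$, consistent with $Q$ if $w^*_e=w_e$ for $e\in Q$. $Q$ verifies a basis $B$ (is a certificate for $B$) if for every weight assignment consistent with $Q$, $B$ is a minimum-weight basis with respect to it. *)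

theory Defs
  imports Complex_Main
begin

definition matroid :: "'a set \<Rightarrow> ('a set \<Rightarrow> bool) \<Rightarrow> bool" where
  "matroid E indep \<longleftrightarrow>
     finite E \<and>
     (\<forall>I. indep I \<longrightarrow> I \<subseteq> E) \<and>
     indep {} \<and>
     (\<forall>I J. indep J \<and> I \<subseteq> J \<longrightarrow> indep I) \<and>
     (\<forall>I J. indep I \<and> indep J \<and> card I < card J \<longrightarrow> (\<exists>x\<in>J - I. indep (insert x I)))"

definition basis :: "'a set \<Rightarrow> ('a set \<Rightarrow> bool) \<Rightarrow> 'a set \<Rightarrow> bool" where
  "basis E indep B \<longleftrightarrow> indep B \<and> (\<forall>x\<in>E - B. \<not> indep (insert x B))"

definition min_weight_basis :: "'a set \<Rightarrow> ('a set \<Rightarrow> bool) \<Rightarrow> ('a \<Rightarrow> real) \<Rightarrow> 'a set \<Rightarrow> bool" where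
  "min_weight_basis E indep w B \<longleftrightarrow>
     basis E indep B \<and> (\<forall>B'. basis E indep B' \<longrightarrow> (\<Sum>x\<in>B. w x) \<le> (\<Sum>x\<in>B'. w x))"

definition bounded_interval :: "real set \<Rightarrow> bool" where
  "bounded_interval S \<longleftrightarrow> (\<exists>a b. S = {a..b} \<or> S = {a<..<b})"

definition uncertainty_set :: "real set \<Rightarrow> bool" where
  "uncertainty_set S \<longleftrightarrow> S \<noteq> {} \<and>
     (\<exists>\<F>. finite \<F> \<and> (\<forall>I\<in>\<F>. bounded_interval I) \<and> S = \<Union>\<F>)"

definition weighted_uncertainty_matroid ::
  "'a set \<Rightarrow> ('a set \<Rightarrow> bool) \<Rightarrow> ('a \<Rightarrow> real set) \<Rightarrow> ('a \<Rightarrow> real) \<Rightarrow> bool" where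
  "weighted_uncertainty_matroid E indep A w \<longleftrightarrow>
     matroid E indep \<and> (\<forall>e\<in>E. uncertainty_set (A e) \<and> w e \<in> A e)"

definition trivial_elem :: "('a \<Rightarrow> real set) \<Rightarrow> ('a \<Rightarrow> real) \<Rightarrow> 'a \<Rightarrow> bool" where
  "trivial_elem A w e \<longleftrightarrow> A e = {w e}"

definition consistent_assignment ::
  "'a set \<Rightarrow> ('a \<Rightarrow> real set) \<Rightarrow> ('a \<Rightarrow> real) \<Rightarrow> 'a set \<Rightarrow> ('a \<Rightarrow> real) \<Rightarrow> bool" where
  "consistent_assignment E A w Q w' \<longleftrightarrow>
     (\<forall>e\<in>E. w' e \<in> A e) \<and> (\<forall>e\<in>Q. w' e = w e)"

definition verifies ::
  "'a set \<Rightarrow> ('a set \<Rightarrow> bool) \<Rightarrow> ('a \<Rightarrow> real set) \<Rightarrow> ('a \<Rightarrow> real) \<Rightarrow> 'a set \<Rightarrow> 'a set \<Rightarrow> bool" where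
  "verifies E indep A w Q B \<longleftrightarrow>
     (\<forall>w'. consistent_assignment E A w Q w' \<longrightarrow> min_weight_basis E indep w' B)"

end

theory Submission
  imports Defs
begin

lemma card_basis_is_basis:
  assumes m: "matroid E indep" and b: "basis E indep B" and i: "indep B'"
    and c: "card B' = card B"
  shows "basis E indep B'"
  unfolding basis_def
proof (intro conjI ballI notI)
  show "indep B'" by fact
  fix x assume x: "x \<in> E - B'" and ix: "indep (insert x B')"
  have fin: "finite E" and sub: "\<And>I. indep I \<Longrightarrow> I \<subseteq> E" using m unfolding matroid_def by auto
  have "finite B'" using sub[OF i] fin finite_subset by blast
  hence "card (insert x B') = Suc (card B)" using x c by simp
  moreover have ib: "indep B" using b unfolding basis_def by auto
  ultimately obtain y where y: "y \<in> insert x B' - B" "indep (insert y B)"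
    using m ix unfolding matroid_def by (metis lessI)
  have "y \<in> E" using sub[OF ix] y(1) by blast
  thus False using b y unfolding basis_def by blast
qed

theorem lemma12:
  fixes E :: "'a set" and indep :: "'a set \<Rightarrow> bool"
    and A :: "'a \<Rightarrow> real set" and w :: "'a \<Rightarrow> real"
    and Q B :: "'a set" and e e' :: 'a
  assumes "weighted_uncertainty_matroid E indep A w"
    and "min_weight_basis E indep w B"
    and "verifies E indep A w Q B"
    and "e \<in> B" and "e' \<in> E" and "e' \<notin> B"
    and "w e = w e'"
    and "indep ((B - {e}) \<union> {e'})"
    and "\<forall>f\<in>{e, e'}. trivial_elem A w f \<or> f \<in> Q"
  shows "verifies E indep A w Q ((B - {e}) \<union> {e'})"
  unfolding verifies_def
proof (intro allI impI)
  fix w' assume cw: "consistent_assignment E A w Q w'"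
  have m: "matroid E indep" using assms(1) unfolding weighted_uncertainty_matroid_def by auto
  have fin: "finite E" and sub: "\<And>I. indep I \<Longrightarrow> I \<subseteq> E" using m unfolding matroid_def by auto
  have mb: "min_weight_basis E indep w' B" using assms(3) cw unfolding verifies_def by auto
  have bb: "basis E indep B" using mb unfolding min_weight_basis_def by auto
  have BE: "B \<subseteq> E" using bb sub unfolding basis_def by auto
  have finB: "finite B" using BE fin finite_subset by blast
  have eE: "e \<in> E" using BE assms(4) by auto
  have we: "w' e = w e" using cw assms(9) eE unfolding consistent_assignment_def trivial_elem_def by auto
  have we': "w' e' = w e'" using cw assms(9) assms(5) unfolding consistent_assignment_def trivial_elem_def by auto
  let ?B = "(B - {e}) \<union> {e'}"
  have cardeq: "card ?B = card B" using finB assms(4,6)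
    by (simp add: card_Diff_singleton) (metis card_Diff1_less card_gt_0_iff empty_iff Suc_pred)
  have bB': "basis E indep ?B" using card_basis_is_basis[OF m bb assms(8) cardeq] .
  have "(\<Sum>x\<in>?B. w' x) = (\<Sum>x\<in>B - {e}. w' x) + w' e'" using finB assms(4,6)
    by (subst sum.union_disjoint) auto
  also have "\<dots> = (\<Sum>x\<in>B. w' x)" using finB assms(4,7) we we' by (simp add: sum_diff1)
  finally have seq: "(\<Sum>x\<in>?B. w' x) = (\<Sum>x\<in>B. w' x)" .
  show "min_weight_basis E indep w' ?B"
    using mb bB' seq unfolding min_weight_basis_def by simp
qed

end
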